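(* Let $q_1,\dots,q_\ell$ be as in the context and let $r_0\in(0,1)$ be such that for all $i,j$ with $\deg q_i>\deg q_j$ and all sufficiently large $N$, $\min_{N^{r_0}\le n,m\le N}\big(q_i(n,N)-q_j(m,N)\big)\ge N$. Then there exist constants $r_1\in(0,1)$, $c>0$, $A,B>0$, sets $B_N\supset[1,N^{r_0}]\cap\mathbb N$ with $|B_N|\le AN^{r_1}$, and, for each permutation $\varepsilon$ of $\{1,\dots,\ell\}$, finitely many numbers $0\le a_{j,\varepsilon}<b_{j,\varepsilon}\le1$ ($j=1,\dots,l_\varepsilon$), with the intervals $(a_{j,\varepsilon},b_{j,\varepsilon})$ pairwise disjoint over all $(j,\varepsilon)$, such that the sets $$I_\varepsilon(N)=\bigcup_{j=1}^{l_\varepsilon}\big(a_{j,\varepsilon}N+BN^{r_1},\,b_{j,\varepsilon}N-N^{r_1}\big)\cap\mathbb N$$ are pairwise disjoint, their union covers $([1,N]\cap\mathbb N)\setminus B_N$, and for all sufficiently large $N$ and all $n\in I_\varepsilon(N)$ with $n\ge N^{r_0}$: $$q_{\varepsilon(1)}(n,N)<q_{\varepsilon(2)}(n,N)<\dots<q_{\varepsilon(\ell)}(n,N),$$ and whenever $q_{\varepsilon(i)}$ and $q_{\varepsilon(i+1)}$ have the same degree and this degree is $>1$, $q_{\varepsilon(i+1)}(n,N)\ge q_{\varepsilon(i)}(n,N)+cN^{1/2}$.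
   Context: $q_1,\dots,q_\ell$ are polynomials in two variables $(n,N)$ with nonnegative integer coefficients, none of which depends only on $N$; the degree of a bivariate polynomial $p(x,y)$ is the degree of $p(x,x)$; $\deg q_i\le\deg q_{i+1}$; for $i\ne j$ the difference $q_i-q_j$ is not constant; each linear $q_i$ has the form $q_i(n,N)=a_in+b_iN$ with integers $a_i,b_i$. *)

theory Defs
  imports "HOL-Analysis.Analysis" "HOL-Combinatorics.Permutations"
          "HOL-Computational_Algebra.Polynomial"
begin

text \<open>A bivariate polynomial in (n,N) with nonnegative integer coefficients is
represented by its coefficient function: p i j is the coefficient of n^i N^j.
It must have finite support.\<close>
type_synonym bipoly = "nat \<Rightarrow> nat \<Rightarrow> nat"

definition bsupp :: "bipoly \<Rightarrow> (nat \<times> nat) set" where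
  "bsupp p = {(i,j). p i j \<noteq> 0}"

definition is_bipoly :: "bipoly \<Rightarrow> bool" where
  "is_bipoly p \<longleftrightarrow> finite (bsupp p)"

definition beval :: "bipoly \<Rightarrow> real \<Rightarrow> real \<Rightarrow> real" where
  "beval p x y = (\<Sum>(i,j)\<in>bsupp p. real (p i j) * x ^ i * y ^ j)"

definition bdiag :: "bipoly \<Rightarrow> int poly" where
  "bdiag p = (\<Sum>(i,j)\<in>bsupp p. monom (int (p i j)) (i + j))"

definition bdeg :: "bipoly \<Rightarrow> nat" where
  "bdeg p = degree (bdiag p)"

definition depends_only_on_N :: "bipoly \<Rightarrow> bool" where
  "depends_only_on_N p \<longleftrightarrow> (\<forall>(i,j)\<in>bsupp p. i = 0)"

definition bdiff_const :: "bipoly \<Rightarrow> bipoly \<Rightarrow> bool" where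
  "bdiff_const p q \<longleftrightarrow> (\<forall>i j. (i,j) \<noteq> (0,0) \<longrightarrow> p i j = q i j)"

end

theory Submission imports Defs "HOL-Real_Asymp.Real_Asymp" "HOL-Computational_Algebra.Fundamental_Theorem_Algebra" begin


lemma poly_lower:
  fixes p :: "real poly"
  assumes p0: "p \<noteq> 0" and d0: "0 < \<delta>" and d1: "\<delta> \<le> 1"
    and far: "\<And>z. poly (map_poly complex_of_real p) z = 0 \<Longrightarrow> \<delta> \<le> \<bar>t - Re z\<bar>"
  shows "\<bar>lead_coeff p\<bar> * \<delta> ^ degree p \<le> \<bar>poly p t\<bar>"
proof -
  define P where "P = map_poly complex_of_real p"
  have degP: "degree P = degree p" unfolding P_def by (rule degree_map_poly) simp
  have lcP: "lead_coeff P = complex_of_real (lead_coeff p)" using degP unfolding P_def by (simp add: coeff_map_poly)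
  obtain root where R: "smult (lead_coeff P) (\<Prod>i<degree P. [:-root i, 1:]) = P"
    using complex_poly_decompose' by blast
  have isroot: "poly P (root i) = 0" if "i < degree P" for i
  proof -
    have "poly P (root i) = lead_coeff P * (\<Prod>k<degree P. poly [:-root k, 1:] (root i))"
      by (subst R[symmetric]) (simp add: poly_prod)
    also have "(\<Prod>k<degree P. poly [:-root k, 1:] (root i)) = 0"
      using that by (subst prod_zero_iff) auto
    finally show ?thesis by simp
  qed
  have "complex_of_real (poly p t) = poly P (of_real t)"
    unfolding P_def by (induction p) (auto simp: map_poly_pCons)
  also have "\<dots> = lead_coeff P * (\<Prod>k<degree P. (of_real t - root k))"
    by (subst R[symmetric]) (simp add: poly_prod)
  finally have cm: "cmod (complex_of_real (poly p t)) = cmod (lead_coeff P * (\<Prod>k<degree P. (of_real t - root k)))"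
    by simp
  have l2: "cmod (coeff P (degree p)) = \<bar>lead_coeff p\<bar>" using lcP degP by simp
  have eq: "\<bar>poly p t\<bar> = \<bar>lead_coeff p\<bar> * (\<Prod>k<degree p. cmod (of_real t - root k))"
    using cm l2 degP by (simp add: norm_mult prod_norm)
  have "(\<Prod>k<degree p. \<delta>) \<le> (\<Prod>k<degree p. cmod (of_real t - root k))"
  proof (rule prod_mono)
    fix k assume k: "k \<in> {..<degree p}"
    have "\<delta> \<le> \<bar>t - Re (root k)\<bar>" using far[of "root k"] isroot[of k] k degP P_def by auto
    also have "\<dots> = \<bar>Re (of_real t - root k)\<bar>" by simp
    also have "\<dots> \<le> cmod (of_real t - root k)" by (rule abs_Re_le_cmod)
    finally show "0 \<le> \<delta> \<and> \<delta> \<le> cmod (of_real t - root k)" using d0 by simp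
  qed
  then show ?thesis unfolding eq by (simp add: mult_left_mono)
qed

lemma ev1: fixes lc M :: real assumes "lc > 0"
  shows "\<forall>\<^sub>F N in sequentially. M + sqrt (real N) \<le> lc * real N powr (3/4)"
  using assms by real_asymp

lemma poly_ofreal: "poly (map_poly complex_of_real p) (complex_of_real x) = complex_of_real (poly p x)"
  by (induction p) (auto simp: map_poly_pCons)

lemma key:
  fixes c :: "nat \<Rightarrow> nat \<Rightarrow> real" and S :: "(nat\<times>nat) set" and E :: nat
  assumes fin: "finite S" and degS: "\<And>i j. (i,j) \<in> S \<Longrightarrow> i + j \<le> E"
    and nzS: "(ia,ja) \<in> S" and nz0: "(ia,ja) \<noteq> (0,0)" and nzc: "c ia ja \<noteq> 0"
  shows "\<exists>Z::real set. finite Z \<and> (\<forall>r1 a b. 1 - 1/(4*real E) \<le> r1 \<longrightarrow> r1 < 1 \<longrightarrow> 0 \<le> a \<longrightarrow> a < b \<longrightarrow> b \<le> 1 \<longrightarrow> (\<forall>z\<in>Z. z \<le> a \<or> b \<le> z) \<longrightarrow>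
      (\<exists>s\<in>{-1,1::real}. \<forall>\<^sub>F N in sequentially. \<forall>n::nat. a * real N + real N powr r1 < real n \<and> real n < b * real N - real N powr r1 \<longrightarrow>
          sqrt (real N) \<le> s * (\<Sum>(i,j)\<in>S. c i j * real n ^ i * real N ^ j)))"
proof -
  define T where "T = {(i,j). (i,j) \<in> S \<and> c i j \<noteq> 0}"
  have finT: "finite T" using fin unfolding T_def by (rule rev_finite_subset) auto
  have iaT: "(ia,ja) \<in> T" using nzS nzc T_def by auto
  define d where "d = Max ((\<lambda>(i,j). i+j) ` T)"
  have dmax: "i + j \<le> d" if "(i,j) \<in> T" for i j
    unfolding d_def using finT that by (intro Max_ge) force+
  have "d \<in> (\<lambda>(i,j). i+j) ` T" unfolding d_def using finT iaT by (intro Max_in) auto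
  then obtain id jd where dT: "(id,jd) \<in> T" "id + jd = d" by auto
  have d1: "1 \<le> d" using dmax[OF iaT] nz0 by auto
  have dE: "d \<le> E" using dT degS T_def by auto
  define Sd where "Sd = {(i,j). (i,j)\<in>S \<and> i+j = d}"
  have finSd: "finite Sd" using fin unfolding Sd_def by (rule rev_finite_subset) auto
  have SdS: "Sd \<subseteq> S" unfolding Sd_def by auto
  define Pd :: "real poly" where "Pd = (\<Sum>(i,j)\<in>Sd. monom (c i j) i)"
  have polyPd: "poly Pd t = (\<Sum>(i,j)\<in>Sd. c i j * t^i)" for t
    unfolding Pd_def by (simp add: poly_sum poly_monom case_prod_beta)
  have "coeff Pd id = (\<Sum>x\<in>Sd. if x = (id,jd) then c id jd else 0)"
    unfolding Pd_def coeff_sum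
    by (intro sum.cong refl) (auto simp: Sd_def dT(2)[symmetric] split: if_splits)
  also have "\<dots> = c id jd" using dT finSd unfolding T_def by (subst sum.delta) (auto simp: Sd_def)
  finally have coeffPd: "coeff Pd id = c id jd" .
  have Pd0: "Pd \<noteq> 0" using coeffPd dT T_def by auto
  have degPd: "degree Pd \<le> d" unfolding Pd_def
    by (rule degree_sum_le[OF finSd]) (auto simp: Sd_def intro: order.trans[OF degree_monom_le])
  define Z where "Z = Re ` {z. poly (map_poly complex_of_real Pd) z = 0}"
  have "map_poly complex_of_real Pd \<noteq> 0" using Pd0 by (subst map_poly_eq_0_iff) auto
  then have finZ: "finite Z" unfolding Z_def by (intro finite_imageI poly_roots_finite)
  define lc where "lc = \<bar>lead_coeff Pd\<bar>"
  have lc0: "lc > 0" using Pd0 unfolding lc_def by simp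
  define M where "M = (\<Sum>(i,j)\<in>S. \<bar>c i j\<bar>)"
  show ?thesis
  proof (intro exI[of _ Z] conjI finZ allI impI)
    fix r1 a b :: real
    assume r1: "1 - 1/(4*real E) \<le> r1" "r1 < 1" and ab: "0 \<le> a" "a < b" "b \<le> 1"
      and Zab: "\<forall>z\<in>Z. z \<le> a \<or> b \<le> z"
    have noroot: "poly Pd t \<noteq> 0" if "a < t" "t < b" for t
    proof
      assume "poly Pd t = 0"
      then have "poly (map_poly complex_of_real Pd) (of_real t) = 0" by (simp add: poly_ofreal)
      then have "Re (of_real t) \<in> Z" unfolding Z_def by blast
      then show False using Zab that by force
    qed
    define m where "m = (a+b)/2"
    have m: "a < m" "m < b" using ab unfolding m_def by auto
    define s where "s = sgn (poly Pd m)"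
    have sgnconst: "s * poly Pd t = \<bar>poly Pd t\<bar>" if t: "a < t" "t < b" for t
    proof (rule ccontr)
      assume ne: "s * poly Pd t \<noteq> \<bar>poly Pd t\<bar>"
      have pm: "poly Pd m \<noteq> 0" using noroot m by auto
      have pt: "poly Pd t \<noteq> 0" using noroot t by auto
      have neg: "poly Pd (min m t) * poly Pd (max m t) < 0"
        using ne pm pt unfolding s_def
        by (cases "m \<le> t") (auto simp: sgn_if abs_if mult_less_0_iff split: if_splits)
      have "m \<noteq> t" using neg by (auto simp: min_def max_def)
      then have "min m t < max m t" by auto
      from poly_IVT[OF this neg] obtain x where "x > min m t" "x < max m t" "poly Pd x = 0" by auto
      then show False using noroot[of x] m t by auto
    qed
    have s: "s \<in> {-1,1}" using noroot[OF m] unfolding s_def by (auto simp: sgn_if)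
    have ev: "\<forall>\<^sub>F N in sequentially. M + sqrt (real N) \<le> lc * real N powr (3/4)"
      using lc0 by real_asymp
    show "\<exists>s\<in>{-1,1::real}. \<forall>\<^sub>F N in sequentially. \<forall>n::nat. a * real N + real N powr r1 < real n \<and> real n < b * real N - real N powr r1 \<longrightarrow>
          sqrt (real N) \<le> s * (\<Sum>(i,j)\<in>S. c i j * real n ^ i * real N ^ j)"
    proof (intro bexI[of _ s] s, rule eventually_mono[OF eventually_conj[OF ev eventually_ge_at_top[of 1]]])
      fix N :: nat assume N: "M + sqrt (real N) \<le> lc * real N powr (3/4) \<and> 1 \<le> N"
      have N1: "1 \<le> real N" using N by simp
      show "\<forall>n::nat. a * real N + real N powr r1 < real n \<and> real n < b * real N - real N powr r1 \<longrightarrow>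
          sqrt (real N) \<le> s * (\<Sum>(i,j)\<in>S. c i j * real n ^ i * real N ^ j)"
      proof (intro allI impI)
        fix n :: nat assume nJ: "a * real N + real N powr r1 < real n \<and> real n < b * real N - real N powr r1"
        define t where "t = real n / real N"
        define \<delta> where "\<delta> = real N powr (r1 - 1)"
        have Npos: "real N > 0" using N1 by simp
        have \<delta>0: "\<delta> > 0" unfolding \<delta>_def using Npos by simp
        have \<delta>1: "\<delta> \<le> 1" unfolding \<delta>_def using N1 r1 powr_mono[of "r1 - 1" 0 "real N"] by simp
        have Nr1: "real N powr r1 = \<delta> * real N"
        proof -
          have "\<delta> * real N = real N powr (r1 - 1) * real N powr 1" unfolding \<delta>_def using Npos by simp
          also have "\<dots> = real N powr r1" by (metis powr_add diff_add_cancel)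
          finally show ?thesis by simp
        qed
        have nt: "real n = t * real N" unfolding t_def using Npos by simp
        have "(a + \<delta>) * real N < t * real N" using nJ unfolding Nr1 nt by (simp add: algebra_simps)
        then have tlo: "a + \<delta> < t" using Npos by simp
        have "t * real N < (b - \<delta>) * real N" using nJ unfolding Nr1 nt by (simp add: algebra_simps)
        then have thi: "t < b - \<delta>" using Npos by simp
        have far: "\<delta> \<le> \<bar>t - Re z\<bar>" if "poly (map_poly complex_of_real Pd) z = 0" for z
        proof -
          have "Re z \<in> Z" unfolding Z_def using that by blast
          then have "Re z \<le> a \<or> b \<le> Re z" using Zab by auto
          then show ?thesis using tlo thi by auto
        qed
        have low: "lc * \<delta> ^ degree Pd \<le> \<bar>poly Pd t\<bar>"
          unfolding lc_def by (rule poly_lower[OF Pd0 \<delta>0 \<delta>1 far])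
        have "\<delta> ^ d \<le> \<delta> ^ degree Pd" using \<delta>0 \<delta>1 degPd by (intro power_decreasing) auto
        moreover have "\<delta> ^ d = real N powr ((r1 - 1) * real d)"
          unfolding \<delta>_def using Npos by (simp add: powr_powr[symmetric] powr_realpow)
        moreover have "(r1 - 1) * real d \<ge> -1/4"
        proof -
          have E1: "real E \<ge> 1" using d1 dE by simp
          have "(1 - r1) * real d \<le> (1/(4*real E)) * real E"
            using r1 dE d1 by (intro mult_mono) auto
          also have "\<dots> = 1/4" using E1 by simp
          finally show ?thesis by (simp add: algebra_simps)
        qed
        then have "real N powr (-1/4) \<le> real N powr ((r1 - 1) * real d)"
          using N1 by (intro powr_mono) auto
        ultimately have "real N powr (-1/4) \<le> \<delta> ^ degree Pd" by linarith
        then have "lc * real N powr (-1/4) \<le> lc * \<delta> ^ degree Pd" using lc0 by (intro mult_left_mono) auto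
        then have low2: "lc * real N powr (-1/4) \<le> \<bar>poly Pd t\<bar>" using low by linarith
        have top: "(\<Sum>(i,j)\<in>Sd. c i j * real n ^ i * real N ^ j) = real N ^ d * poly Pd t"
          unfolding polyPd sum_distrib_left
        proof (intro sum.cong refl, clarify)
          fix i j assume "(i,j) \<in> Sd"
          then have "d = i + j" unfolding Sd_def by auto
          then show "c i j * real n ^ i * real N ^ j = real N ^ d * (c i j * t ^ i)"
            unfolding nt by (simp add: power_mult_distrib power_add)
        qed
        define Rest where "Rest = (\<Sum>(i,j)\<in>S - Sd. c i j * real n ^ i * real N ^ j)"
        have split: "(\<Sum>(i,j)\<in>S. c i j * real n ^ i * real N ^ j) = Rest + real N ^ d * poly Pd t"
          unfolding Rest_def top[symmetric] by (rule sum.subset_diff[OF SdS fin])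
        have nN: "real n \<le> real N"
        proof -
          have "t \<le> 1" using thi ab \<delta>0 by simp
          then show ?thesis unfolding nt using Npos by simp
        qed
        have "\<bar>Rest\<bar> \<le> (\<Sum>(i,j)\<in>S - Sd. \<bar>c i j * real n ^ i * real N ^ j\<bar>)"
          unfolding Rest_def by (rule order_trans[OF sum_abs]) (simp add: case_prod_beta)
        also have "\<dots> \<le> (\<Sum>(i,j)\<in>S - Sd. \<bar>c i j\<bar> * real N ^ (d - 1))"
        proof (intro sum_mono, clarify)
          fix i j assume ij: "(i,j) \<in> S" "(i,j) \<notin> Sd"
          show "\<bar>c i j * real n ^ i * real N ^ j\<bar> \<le> \<bar>c i j\<bar> * real N ^ (d - 1)"
          proof (cases "c i j = 0")
            case False
            then have "(i,j) \<in> T" using ij T_def by auto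
            then have "i + j \<le> d - 1" using dmax ij Sd_def by fastforce
            have "real n ^ i * real N ^ j \<le> real N ^ i * real N ^ j"
              using nN by (intro mult_right_mono power_mono) auto
            also have "\<dots> = real N ^ (i + j)" by (simp add: power_add)
            also have "\<dots> \<le> real N ^ (d - 1)" using N1 \<open>i + j \<le> d - 1\<close> by (intro power_increasing) auto
            finally have "real n ^ i * real N ^ j \<le> real N ^ (d - 1)" .
            then have "\<bar>c i j\<bar> * (real n ^ i * real N ^ j) \<le> \<bar>c i j\<bar> * real N ^ (d - 1)"
              by (intro mult_left_mono) auto
            then show ?thesis by (simp add: abs_mult mult.assoc)
          qed simp
        qed
        also have "\<dots> \<le> (\<Sum>(i,j)\<in>S. \<bar>c i j\<bar> * real N ^ (d - 1))"
          by (intro sum_mono2 fin) auto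
        also have "\<dots> = M * real N ^ (d - 1)" unfolding M_def sum_distrib_right by (simp add: case_prod_beta)
        finally have restb: "\<bar>Rest\<bar> \<le> M * real N ^ (d - 1)" .
        have Nd: "real N ^ d = real N ^ (d - 1) * real N" using d1 by (metis Suc_diff_1 less_le_trans zero_less_one power_Suc2)
        have N34: "real N * real N powr (-1/4) = real N powr (3/4)"
        proof -
          have "real N * real N powr (-1/4) = real N powr 1 * real N powr (-1/4)" using Npos by simp
          also have "\<dots> = real N powr (1 + (-1/4))" by (metis powr_add)
          also have "\<dots> = real N powr (3/4)" by simp
          finally show ?thesis .
        qed
        have "s * (Rest + real N ^ d * poly Pd t) = s * Rest + real N ^ d * \<bar>poly Pd t\<bar>"
          using sgnconst[of t] tlo thi \<delta>0 by (simp add: algebra_simps)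
        also have "\<dots> \<ge> - \<bar>Rest\<bar> + real N ^ d * (lc * real N powr (-1/4))"
          using s low2 by (intro add_mono mult_left_mono) auto
        finally have "s * (Rest + real N ^ d * poly Pd t) \<ge> real N ^ (d - 1) * (lc * real N powr (3/4) - M)"
          using restb unfolding Nd N34[symmetric] by (simp add: algebra_simps)
        moreover have "real N ^ (d - 1) * (lc * real N powr (3/4) - M) \<ge> 1 * sqrt (real N)"
          using N N1 by (intro mult_mono one_le_power) auto
        ultimately show "sqrt (real N) \<le> s * (\<Sum>(i,j)\<in>S. c i j * real n ^ i * real N ^ j)"
          unfolding split by simp
      qed
    qed
  qed
qed



lemma evpow: fixes e X :: real assumes "e > 0"
  shows "\<forall>\<^sub>F N in sequentially. X \<le> real N powr e"
  using assms by real_asymp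

lemma evgap: fixes g r :: real assumes g: "g > 0" and r: "r < 1" "0 \<le> r"
  shows "\<forall>\<^sub>F N in sequentially. 2 * real N powr r + 2 < g * real N"
proof (rule eventually_mono[OF eventually_conj[OF evpow[of "1 - r" "5/g"] eventually_ge_at_top[of 1]]])
  show "0 < 1 - r" using r by simp
  fix N :: nat assume N: "5/g \<le> real N powr (1 - r) \<and> 1 \<le> N"
  then have Npos: "real N > 0" by simp
  have N1: "real N powr r \<ge> 1" using N r by (intro ge_one_powr_ge_zero) auto
  have "real N powr (1 - r) * real N powr r = real N" using Npos by (simp add: powr_add[symmetric])
  then have "real N = real N powr (1 - r) * real N powr r" by simp
  then have eqN: "g * real N = (g * real N powr (1 - r)) * real N powr r" by simp
  have "g * real N powr (1 - r) \<ge> 5" using N g by (simp add: field_simps)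
  then have "5 * real N powr r \<le> (g * real N powr (1 - r)) * real N powr r" using N1 by (intro mult_right_mono) auto
  with eqN have "g * real N \<ge> 5 * real N powr r" by linarith
  then show "2 * real N powr r + 2 < g * real N" using N1 by linarith
qed

lemma sort_perm:
  fixes v :: "nat \<Rightarrow> real"
  assumes inj: "inj_on v {1..L}"
  shows "\<exists>\<sigma>. \<sigma> permutes {1..L} \<and> (\<forall>i\<in>{1..<L}. v (\<sigma> i) < v (\<sigma> (i+1)))"
proof -
  define xs where "xs = sorted_list_of_set (v ` {1..L})"
  have len: "length xs = L" unfolding xs_def using inj by (simp add: card_image)
  have setxs: "set xs = v ` {1..L}" unfolding xs_def by simp
  have sxs: "sorted_wrt (<) xs" unfolding xs_def by (simp add: strict_sorted_iff)
  have dxs: "distinct xs" unfolding xs_def by simp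
  define \<sigma> where "\<sigma> i = (if i \<in> {1..L} then the_inv_into {1..L} v (xs ! (i - 1)) else i)" for i
  have \<sigma>in: "\<sigma> i \<in> {1..L} \<and> v (\<sigma> i) = xs ! (i - 1)" if "i \<in> {1..L}" for i
  proof -
    have "xs ! (i - 1) \<in> v ` {1..L}" using that len setxs[symmetric] by (auto intro!: nth_mem)
    then obtain k where k: "k \<in> {1..L}" "v k = xs ! (i - 1)" by auto
    then have "the_inv_into {1..L} v (xs ! (i - 1)) = k" using inj by (metis the_inv_into_f_f)
    then show ?thesis using that k unfolding \<sigma>_def by simp
  qed
  have injs: "inj_on \<sigma> {1..L}"
  proof (rule inj_onI)
    fix i j assume ij: "i \<in> {1..L}" "j \<in> {1..L}" "\<sigma> i = \<sigma> j"
    then have "xs ! (i - 1) = xs ! (j - 1)" using \<sigma>in[of i] \<sigma>in[of j] ij by simp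
    then have "i - 1 = j - 1" using ij len by (subst (asm) nth_eq_iff_index_eq[OF dxs]) auto
    then show "i = j" using ij by auto
  qed
  have img: "\<sigma> ` {1..L} = {1..L}" using injs \<sigma>in by (intro endo_inj_surj) auto
  have bb: "bij_betw \<sigma> {1..L} {1..L}" using injs img by (simp add: bij_betw_def)
  have outs: "\<And>x. x \<notin> {1..L} \<Longrightarrow> \<sigma> x = x" unfolding \<sigma>_def by auto
  have perm: "\<sigma> permutes {1..L}" using bb outs by (rule bij_imp_permutes)
  have "v (\<sigma> i) < v (\<sigma> (i+1))" if "i \<in> {1..<L}" for i
  proof -
    have "v (\<sigma> i) = xs ! (i - 1)" "v (\<sigma> (i+1)) = xs ! i" using \<sigma>in[of i] \<sigma>in[of "i+1"] that by auto
    moreover have "xs ! (i - 1) < xs ! i" using that len by (intro sorted_wrt_nth_less[OF sxs]) auto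
    ultimately show ?thesis by simp
  qed
  then show ?thesis using perm by blast
qed

lemma interval_perm:
  fixes f :: "nat \<Rightarrow> nat \<Rightarrow> nat \<Rightarrow> real" and J :: "nat \<Rightarrow> nat set"
  assumes pair: "\<And>i j. i\<in>{1..L} \<Longrightarrow> j\<in>{1..L} \<Longrightarrow> i \<noteq> j \<Longrightarrow>
      \<exists>s\<in>{-1,1::real}. \<forall>\<^sub>F N in sequentially. \<forall>n\<in>J N. sqrt (real N) \<le> s * (f j n N - f i n N)"
    and ne: "\<forall>\<^sub>F N in sequentially. J N \<noteq> {}"
  shows "\<exists>\<sigma>. \<sigma> permutes {1..L} \<and> (\<forall>\<^sub>F N in sequentially. \<forall>n\<in>J N. \<forall>i\<in>{1..<L}.
            sqrt (real N) \<le> f (\<sigma> (i+1)) n N - f (\<sigma> i) n N)"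
proof -
  define P where "P = {(i,j). i\<in>{1..L} \<and> j\<in>{1..L} \<and> i\<noteq>j}"
  have finP: "finite P" unfolding P_def by (rule finite_subset[of _ "{1..L} \<times> {1..L}"]) auto
  have "\<forall>p\<in>P. \<exists>s\<in>{-1,1::real}. \<forall>\<^sub>F N in sequentially. \<forall>n\<in>J N. sqrt (real N) \<le> s * (f (snd p) n N - f (fst p) n N)"
    using pair unfolding P_def by auto
  then have "\<forall>p\<in>P. \<exists>s. s \<in> {-1,1::real} \<and> (\<forall>\<^sub>F N in sequentially. \<forall>n\<in>J N. sqrt (real N) \<le> s * (f (snd p) n N - f (fst p) n N))"
    by blast
  from bchoice[OF this] obtain sg where sgA: "\<forall>p\<in>P. sg p \<in> {-1,1} \<and> (\<forall>\<^sub>F N in sequentially. \<forall>n\<in>J N. sqrt (real N) \<le> sg p * (f (snd p) n N - f (fst p) n N))"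
    by blast
  have sg: "sg p \<in> {-1,1} \<and> (\<forall>\<^sub>F N in sequentially. \<forall>n\<in>J N. sqrt (real N) \<le> sg p * (f (snd p) n N - f (fst p) n N))" if "p \<in> P" for p
    using sgA that by (rule bspec)
  have "\<forall>\<^sub>F N in sequentially. (\<forall>p\<in>P. \<forall>n\<in>J N. sqrt (real N) \<le> sg p * (f (snd p) n N - f (fst p) n N)) \<and> J N \<noteq> {} \<and> 1 \<le> N"
    using sg finP ne by (intro eventually_conj eventually_ball_finite) (auto simp: eventually_ge_at_top)
  then obtain N0 where N0: "\<And>N. N \<ge> N0 \<Longrightarrow> (\<forall>p\<in>P. \<forall>n\<in>J N. sqrt (real N) \<le> sg p * (f (snd p) n N - f (fst p) n N)) \<and> J N \<noteq> {} \<and> 1 \<le> N"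
    by (auto simp: eventually_sequentially)
  obtain n0 where n0: "n0 \<in> J N0" using N0[of N0] by auto
  have sq0: "sqrt (real N0) > 0" using N0[of N0] by auto
  define v where "v i = f i n0 N0" for i
  have vpos: "sqrt (real N0) \<le> sg p * (v (snd p) - v (fst p))" if "p \<in> P" for p
    using N0[of N0] n0 that unfolding v_def by auto
  have inj: "inj_on v {1..L}"
  proof (rule inj_onI, rule ccontr)
    fix i j assume ij: "i \<in> {1..L}" "j \<in> {1..L}" "v i = v j" "i \<noteq> j"
    then have "(i,j) \<in> P" unfolding P_def by auto
    from vpos[OF this] ij sq0 show False by simp
  qed
  obtain \<sigma> where \<sigma>: "\<sigma> permutes {1..L}" "\<And>i. i\<in>{1..<L} \<Longrightarrow> v (\<sigma> i) < v (\<sigma> (i+1))"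
    using sort_perm[OF inj] by blast
  show ?thesis
  proof (intro exI[of _ \<sigma>] conjI \<sigma>(1), unfold eventually_sequentially, intro exI[of _ N0] allI impI ballI)
    fix N n i assume N: "N0 \<le> N" and n: "n \<in> J N" and i: "i \<in> {1..<L}"
    define p where "p = (\<sigma> i, \<sigma> (i+1))"
    have "\<sigma> i \<in> {1..L}" "\<sigma> (i+1) \<in> {1..L}" using i permutes_in_image[OF \<sigma>(1)] by auto
    moreover have "\<sigma> i \<noteq> \<sigma> (i+1)" using permutes_inj[OF \<sigma>(1)] by (metis injD n_not_Suc_n Suc_eq_plus1)
    ultimately have pP: "p \<in> P" unfolding P_def p_def by auto
    have "sg p = 1"
    proof (rule ccontr)
      assume "sg p \<noteq> 1"
      then have "sg p = -1" using sg[OF pP] by auto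
      then show False using vpos[OF pP] \<sigma>(2)[OF i] sq0 unfolding p_def by simp
    qed
    then show "sqrt (real N) \<le> f (\<sigma> (i+1)) n N - f (\<sigma> i) n N"
      using N0[OF N] pP n unfolding p_def by force
  qed
qed

lemma beval_S: assumes "finite S" "bsupp p \<subseteq> S"
  shows "beval p x y = (\<Sum>(i,j)\<in>S. real (p i j) * x ^ i * y ^ j)"
  unfolding beval_def using assms
  by (intro sum.mono_neutral_left) (auto simp: bsupp_def)

lemma pairkey:
  assumes pp: "is_bipoly p" and pq: "is_bipoly q" and nc: "\<not> bdiff_const p q"
    and deg: "\<And>i j. (i,j) \<in> bsupp p \<union> bsupp q \<Longrightarrow> i + j \<le> E"
  shows "\<exists>Z::real set. finite Z \<and> (\<forall>r1 a b. 1 - 1/(4*real E) \<le> r1 \<longrightarrow> r1 < 1 \<longrightarrow> 0 \<le> a \<longrightarrow> a < b \<longrightarrow> b \<le> 1 \<longrightarrow> (\<forall>z\<in>Z. z \<le> a \<or> b \<le> z) \<longrightarrow>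
      (\<exists>s\<in>{-1,1::real}. \<forall>\<^sub>F N in sequentially. \<forall>n::nat. a * real N + real N powr r1 < real n \<and> real n < b * real N - real N powr r1 \<longrightarrow>
          sqrt (real N) \<le> s * (beval q (real n) (real N) - beval p (real n) (real N))))"
proof -
  define S where "S = bsupp p \<union> bsupp q"
  have finS: "finite S" using pp pq unfolding S_def is_bipoly_def by auto
  obtain i0 j0 where ij0: "(i0,j0) \<noteq> (0,0)" "p i0 j0 \<noteq> q i0 j0" using nc unfolding bdiff_const_def by auto
  have inS: "(i0,j0) \<in> S" using ij0 unfolding S_def bsupp_def by auto
  define c where "c i j = real (q i j) - real (p i j)" for i j
  have c0: "c i0 j0 \<noteq> 0" using ij0 unfolding c_def by simp
  have eq: "beval q x y - beval p x y = (\<Sum>(i,j)\<in>S. c i j * x ^ i * y ^ j)" for x y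
  proof -
    have "beval q x y = (\<Sum>(i,j)\<in>S. real (q i j) * x ^ i * y ^ j)" by (rule beval_S[OF finS]) (auto simp: S_def)
    moreover have "beval p x y = (\<Sum>(i,j)\<in>S. real (p i j) * x ^ i * y ^ j)" by (rule beval_S[OF finS]) (auto simp: S_def)
    ultimately show ?thesis unfolding c_def
      by (simp add: sum_subtractf[symmetric] case_prod_beta algebra_simps)
  qed
  show ?thesis unfolding eq
    by (rule key[where S=S and c=c and ia=i0 and ja=j0]) (use finS inS ij0 c0 deg S_def in auto)
qed

lemma card_window:
  fixes lo hi :: real assumes "lo \<le> hi"
  shows "real (card {n::nat. lo \<le> real n \<and> real n \<le> hi}) \<le> hi - lo + 1"
proof -
  define a where "a = nat \<lceil>lo\<rceil>"
  define w where "w = nat \<lfloor>hi - lo\<rfloor>"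
  have sub: "{n::nat. lo \<le> real n \<and> real n \<le> hi} \<subseteq> {a..a + w}"
  proof
    fix n :: nat assume n: "n \<in> {n::nat. lo \<le> real n \<and> real n \<le> hi}"
    then have an: "a \<le> n" unfolding a_def by simp
    have "real n - real a \<le> hi - lo"
    proof (cases "lo \<le> 0")
      case True then have "a = 0" unfolding a_def by simp
      then show ?thesis using n True by simp
    next
      case False then have "real a = real_of_int \<lceil>lo\<rceil>" unfolding a_def by simp
      moreover have "real n \<le> hi" using n by auto
      ultimately show ?thesis using le_of_int_ceiling[of lo] by linarith
    qed
    then have "int n - int a \<le> \<lfloor>hi - lo\<rfloor>" using an by (simp add: le_floor_iff)
    then have "n - a \<le> w" unfolding w_def using an by simp
    then show "n \<in> {a..a+w}" using an by auto
  qed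
  have "card {n::nat. lo \<le> real n \<and> real n \<le> hi} \<le> card {a..a+w}" by (rule card_mono[OF _ sub]) simp
  also have "card {a..a+w} = w + 1" by simp
  finally have "real (card {n::nat. lo \<le> real n \<and> real n \<le> hi}) \<le> real w + 1" by linarith
  also have "real w \<le> hi - lo" unfolding w_def using assms by simp
  finally show ?thesis by simp
qed



theorem mainTheorem12:
  fixes L :: nat and q :: "nat \<Rightarrow> bipoly" and r\<^sub>0 :: real
  assumes poly: "\<And>i. i \<in> {1..L} \<Longrightarrow> is_bipoly (q i)"
    and notN: "\<And>i. i \<in> {1..L} \<Longrightarrow> \<not> depends_only_on_N (q i)"
    and degmono: "\<And>i. i \<in> {1..<L} \<Longrightarrow> bdeg (q i) \<le> bdeg (q (i+1))"
    and nonconst: "\<And>i j. i \<in> {1..L} \<Longrightarrow> j \<in> {1..L} \<Longrightarrow> i \<noteq> j \<Longrightarrow>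
                     \<not> bdiff_const (q i) (q j)"
    and linear: "\<And>i. i \<in> {1..L} \<Longrightarrow> bdeg (q i) = 1 \<Longrightarrow>
                   \<exists>a b :: int. \<forall>x y. beval (q i) x y = of_int a * x + of_int b * y"
    and r0: "0 < r\<^sub>0" "r\<^sub>0 < 1"
    and sep: "\<And>i j. i \<in> {1..L} \<Longrightarrow> j \<in> {1..L} \<Longrightarrow> bdeg (q i) > bdeg (q j) \<Longrightarrow>
               \<forall>\<^sub>F N in sequentially. \<forall>n m :: nat.
                  real N powr r\<^sub>0 \<le> real n \<and> n \<le> N \<and> real N powr r\<^sub>0 \<le> real m \<and> m \<le> N \<longrightarrow>
                  beval (q i) (real n) (real N) - beval (q j) (real m) (real N) \<ge> real N"
  shows "\<exists>r\<^sub>1 c A B (BS :: nat \<Rightarrow> nat set) (l :: (nat \<Rightarrow> nat) \<Rightarrow> nat)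
            (a :: (nat \<Rightarrow> nat) \<Rightarrow> nat \<Rightarrow> real) (b :: (nat \<Rightarrow> nat) \<Rightarrow> nat \<Rightarrow> real).
     0 < r\<^sub>1 \<and> r\<^sub>1 < 1 \<and> c > 0 \<and> A > 0 \<and> B > 0 \<and>
     (\<forall>N::nat. N \<ge> 1 \<longrightarrow>
        {n::nat. 1 \<le> n \<and> real n \<le> real N powr r\<^sub>0} \<subseteq> BS N \<and>
        finite (BS N) \<and> real (card (BS N)) \<le> A * real N powr r\<^sub>1) \<and>
     (\<forall>\<epsilon>. \<epsilon> permutes {1..L} \<longrightarrow>
        (\<forall>j \<in> {1..l \<epsilon>}. 0 \<le> a \<epsilon> j \<and> a \<epsilon> j < b \<epsilon> j \<and> b \<epsilon> j \<le> 1)) \<and>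
     (\<forall>\<epsilon> \<epsilon>' j j'. \<epsilon> permutes {1..L} \<and> \<epsilon>' permutes {1..L} \<and>
        j \<in> {1..l \<epsilon>} \<and> j' \<in> {1..l \<epsilon>'} \<and> (j, \<epsilon>) \<noteq> (j', \<epsilon>') \<longrightarrow>
        {a \<epsilon> j<..<b \<epsilon> j} \<inter> {a \<epsilon>' j'<..<b \<epsilon>' j'} = {}) \<and>
     (let I = (\<lambda>\<epsilon> (N::nat). {n::nat. \<exists>j \<in> {1..l \<epsilon>}.
                  a \<epsilon> j * real N + B * real N powr r\<^sub>1 < real n \<and>
                  real n < b \<epsilon> j * real N - real N powr r\<^sub>1})
      in (\<forall>N::nat. N \<ge> 1 \<longrightarrow>
            (\<forall>\<epsilon> \<epsilon>'. \<epsilon> permutes {1..L} \<and> \<epsilon>' permutes {1..L} \<and> \<epsilon> \<noteq> \<epsilon>' \<longrightarrow>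
                I \<epsilon> N \<inter> I \<epsilon>' N = {}) \<and>
            {1..N} - BS N \<subseteq> (\<Union>\<epsilon> \<in> {\<epsilon>. \<epsilon> permutes {1..L}}. I \<epsilon> N)) \<and>
         (\<forall>\<^sub>F N in sequentially. \<forall>\<epsilon>. \<epsilon> permutes {1..L} \<longrightarrow>
            (\<forall>n \<in> I \<epsilon> N. real n \<ge> real N powr r\<^sub>0 \<longrightarrow>
               (\<forall>i \<in> {1..<L}.
                  beval (q (\<epsilon> i)) (real n) (real N) < beval (q (\<epsilon> (i+1))) (real n) (real N) \<and>
                  (bdeg (q (\<epsilon> i)) = bdeg (q (\<epsilon> (i+1))) \<and> bdeg (q (\<epsilon> i)) > 1 \<longrightarrow>
                    beval (q (\<epsilon> (i+1))) (real n) (real N)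
                      \<ge> beval (q (\<epsilon> i)) (real n) (real N) + c * sqrt (real N))))))"
proof -
  define fq where "fq i n N = beval (q i) (real n) (real N)" for i n N :: nat
  define P where "P = {(i,j). i\<in>{1..L} \<and> j\<in>{1..L} \<and> i\<noteq>j}"
  define U where "U = (\<Union>k\<in>{1..L}. bsupp (q k))"
  have finU: "finite U" using poly unfolding U_def is_bipoly_def by auto
  define E where "E = Max (insert 1 ((\<lambda>(i,j). i+j) ` U))"
  have degU: "i + j \<le> E" if "k\<in>{1..L}" "(i,j) \<in> bsupp (q k)" for i j k
  proof -
    have "(i,j) \<in> U" using that unfolding U_def by auto
    then show ?thesis unfolding E_def using finU by (intro Max_ge) force+
  qed
  have E1: "1 \<le> E" unfolding E_def using finU by (intro Max_ge) auto
  have "\<forall>p\<in>P. \<exists>Z::real set. finite Z \<and> (\<forall>r1 a b. 1 - 1/(4*real E) \<le> r1 \<longrightarrow> r1 < 1 \<longrightarrow> 0 \<le> a \<longrightarrow> a < b \<longrightarrow> b \<le> 1 \<longrightarrow> (\<forall>z\<in>Z. z \<le> a \<or> b \<le> z) \<longrightarrow>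
      (\<exists>s\<in>{-1,1::real}. \<forall>\<^sub>F N in sequentially. \<forall>n::nat. a * real N + real N powr r1 < real n \<and> real n < b * real N - real N powr r1 \<longrightarrow>
          sqrt (real N) \<le> s * (beval (q (snd p)) (real n) (real N) - beval (q (fst p)) (real n) (real N))))"
  proof
    fix p assume "p \<in> P"
    then obtain i j where p: "p = (i,j)" "i\<in>{1..L}" "j\<in>{1..L}" "i\<noteq>j" unfolding P_def by auto
    show "\<exists>Z::real set. finite Z \<and> (\<forall>r1 a b. 1 - 1/(4*real E) \<le> r1 \<longrightarrow> r1 < 1 \<longrightarrow> 0 \<le> a \<longrightarrow> a < b \<longrightarrow> b \<le> 1 \<longrightarrow> (\<forall>z\<in>Z. z \<le> a \<or> b \<le> z) \<longrightarrow>
      (\<exists>s\<in>{-1,1::real}. \<forall>\<^sub>F N in sequentially. \<forall>n::nat. a * real N + real N powr r1 < real n \<and> real n < b * real N - real N powr r1 \<longrightarrow>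
          sqrt (real N) \<le> s * (beval (q (snd p)) (real n) (real N) - beval (q (fst p)) (real n) (real N))))"
      unfolding p(1) fst_conv snd_conv
      by (rule pairkey) (use p poly nonconst degU in auto)
  qed
  from bchoice[OF this] obtain Zf where ZfA: "\<forall>p\<in>P. finite (Zf p) \<and> (\<forall>r1 a b. 1 - 1/(4*real E) \<le> r1 \<longrightarrow> r1 < 1 \<longrightarrow> 0 \<le> a \<longrightarrow> a < b \<longrightarrow> b \<le> 1 \<longrightarrow> (\<forall>z\<in>Zf p. z \<le> a \<or> b \<le> z) \<longrightarrow>
      (\<exists>s\<in>{-1,1::real}. \<forall>\<^sub>F N in sequentially. \<forall>n::nat. a * real N + real N powr r1 < real n \<and> real n < b * real N - real N powr r1 \<longrightarrow>
          sqrt (real N) \<le> s * (beval (q (snd p)) (real n) (real N) - beval (q (fst p)) (real n) (real N))))" by blast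
  have Zf: "finite (Zf p) \<and> (\<forall>r1 a b. 1 - 1/(4*real E) \<le> r1 \<longrightarrow> r1 < 1 \<longrightarrow> 0 \<le> a \<longrightarrow> a < b \<longrightarrow> b \<le> 1 \<longrightarrow> (\<forall>z\<in>Zf p. z \<le> a \<or> b \<le> z) \<longrightarrow>
      (\<exists>s\<in>{-1,1::real}. \<forall>\<^sub>F N in sequentially. \<forall>n::nat. a * real N + real N powr r1 < real n \<and> real n < b * real N - real N powr r1 \<longrightarrow>
          sqrt (real N) \<le> s * (beval (q (snd p)) (real n) (real N) - beval (q (fst p)) (real n) (real N))))" if "p \<in> P" for p using ZfA that by (rule bspec)
  have finP: "finite P" unfolding P_def by (rule finite_subset[of _ "{1..L} \<times> {1..L}"]) auto
  define r1 where "r1 = max (max r\<^sub>0 (3/4)) (1 - 1/(4*real E))"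
  have r1: "0 < r1" "r1 < 1" "r\<^sub>0 \<le> r1" "1 - 1/(4*real E) \<le> r1"
    using r0 E1 unfolding r1_def by auto
  define Pts where "Pts = ({0,1} \<union> (\<Union>p\<in>P. Zf p)) \<inter> {0..1::real}"
  have finPts: "finite Pts" unfolding Pts_def using finP Zf by auto
  have Pts01: "0 \<in> Pts" "1 \<in> Pts" "Pts \<subseteq> {0..1}" unfolding Pts_def by auto
  define ps where "ps = sorted_list_of_set Pts"
  define K where "K = length ps - 1"
  have setps: "set ps = Pts" unfolding ps_def using finPts by simp
  have sps: "sorted_wrt (<) ps" unfolding ps_def by (simp add: strict_sorted_iff)
  have "card {0,1::real} \<le> card Pts" using finPts Pts01 by (intro card_mono) auto
  then have "2 \<le> length ps" unfolding ps_def using finPts by simp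
  then have lenps: "length ps = K + 1" and K1: "1 \<le> K" unfolding K_def by auto
  have psin: "ps ! k \<in> Pts" if "k \<le> K" for k using that lenps setps by (metis less_Suc_eq_le Suc_eq_plus1 nth_mem)
  have ps01c: "0 \<le> ps ! k \<and> ps ! k \<le> 1" if "k \<le> K" for k using psin[OF that] Pts01(3) by auto
  have ps01: "0 \<le> ps ! k" "ps ! k \<le> 1" if "k \<le> K" for k using ps01c[OF that] by auto
  have mono: "ps ! k < ps ! k'" if "k < k'" "k' \<le> K" for k k'
    using that lenps by (intro sorted_wrt_nth_less[OF sps]) auto
  have monole: "ps ! k \<le> ps ! k'" if "k \<le> k'" "k' \<le> K" for k k'
    using mono[of k k'] that by (cases "k = k'") auto
  have idx: "k < k'" if "k \<le> K" "k' \<le> K" "ps ! k < ps ! k'" for k k'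
    using monole[of k' k] that by (cases "k < k'") auto
  have ps0: "ps ! 0 = 0"
  proof -
    obtain m where m: "m < length ps" "ps ! m = 0" using Pts01(1) setps by (metis in_set_conv_nth)
    show ?thesis
    proof (cases "m = 0")
      case True then show ?thesis using m by simp
    next
      case False
      then have "ps ! 0 < ps ! m" using mono[of 0 m] m lenps by simp
      then show ?thesis using ps01(1)[of 0] m by simp
    qed
  qed
  have psK: "ps ! K = 1"
  proof -
    obtain m where m: "m < length ps" "ps ! m = 1" using Pts01(2) setps by (metis in_set_conv_nth)
    show ?thesis
    proof (cases "m = K")
      case True then show ?thesis using m by simp
    next
      case False
      then have "ps ! m < ps ! K" using mono[of m K] m lenps by simp
      then show ?thesis using ps01(2)[of K] m by simp
    qed
  qed
  have gap: "z \<le> ps ! k \<or> ps ! (k+1) \<le> z" if "k < K" "p \<in> P" "z \<in> Zf p" for k p z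
  proof (rule ccontr)
    assume "\<not> (z \<le> ps ! k \<or> ps ! (k+1) \<le> z)"
    then have z: "ps ! k < z" "z < ps ! (k+1)" by auto
    have "z \<in> Pts" unfolding Pts_def using that z ps01[of k] ps01[of "k+1"] by auto
    then obtain m where m: "m < length ps" "ps ! m = z" using setps by (metis in_set_conv_nth)
    have "k < m" using idx[of k m] z m that lenps by auto
    moreover have "m < k + 1" using idx[of m "k+1"] z m that lenps by auto
    ultimately show False by simp
  qed
  define J where "J k N = {n::nat. ps!k * real N + real N powr r1 < real n \<and> real n < ps!(k+1) * real N - real N powr r1}" for k N
  have Jne: "\<forall>\<^sub>F N in sequentially. J k N \<noteq> {}" if "k < K" for k
  proof (rule eventually_mono[OF evgap[of "ps!(k+1) - ps!k" r1]])
    show "0 < ps ! (k + 1) - ps ! k" using mono[of k "k+1"] that by simp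
    show "r1 < 1" "0 \<le> r1" using r1 by auto
    fix N :: nat assume N: "2 * real N powr r1 + 2 < (ps ! (k + 1) - ps ! k) * real N"
    define x where "x = ps!k * real N + real N powr r1"
    have x0: "x \<ge> 0" unfolding x_def using ps01[of k] that by simp
    define n where "n = nat \<lfloor>x\<rfloor> + 1"
    have rn: "real n = real_of_int \<lfloor>x\<rfloor> + 1" unfolding n_def using x0 by simp
    have "x < real n" "real n \<le> x + 1" unfolding rn by linarith+
    then have "n \<in> J k N" unfolding J_def x_def using N by (auto simp: algebra_simps)
    then show "J k N \<noteq> {}" by auto
  qed
  have "\<forall>k\<in>{..<K}. (\<exists>\<sigma>. \<sigma> permutes {1..L} \<and> (\<forall>\<^sub>F N in sequentially. \<forall>n\<in>J k N. \<forall>i\<in>{1..<L}.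
            sqrt (real N) \<le> fq (\<sigma> (i+1)) n N - fq (\<sigma> i) n N))"
  proof (intro ballI interval_perm)
    fix k assume "k \<in> {..<K}"
    then have k: "k < K" by simp
    show "\<forall>\<^sub>F N in sequentially. J k N \<noteq> {}" using Jne[OF k] .
    fix i j assume ij: "i \<in> {1..L}" "j \<in> {1..L}" "i \<noteq> j"
    then have pP: "(i,j) \<in> P" unfolding P_def by auto
    have gz: "\<forall>z\<in>Zf (i,j). z \<le> ps ! k \<or> ps ! (k+1) \<le> z" using gap[OF k pP] by auto
    have h: "0 \<le> ps ! k" "ps ! k < ps ! (k+1)" "ps ! (k+1) \<le> 1"
      using ps01[of k] ps01[of "k+1"] mono[of k "k+1"] k by auto
    have Zp: "\<forall>r1 a b. 1 - 1/(4*real E) \<le> r1 \<longrightarrow> r1 < 1 \<longrightarrow> 0 \<le> a \<longrightarrow> a < b \<longrightarrow> b \<le> 1 \<longrightarrow> (\<forall>z\<in>Zf (i,j). z \<le> a \<or> b \<le> z) \<longrightarrow>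
      (\<exists>s\<in>{-1,1::real}. \<forall>\<^sub>F N in sequentially. \<forall>n::nat. a * real N + real N powr r1 < real n \<and> real n < b * real N - real N powr r1 \<longrightarrow>
          sqrt (real N) \<le> s * (beval (q (snd (i,j))) (real n) (real N) - beval (q (fst (i,j))) (real n) (real N)))"
      using Zf[OF pP] by (rule conjunct2)
    note Zp3 = Zp[THEN spec[of _ r1], THEN spec[of _ "ps!k"], THEN spec[of _ "ps!(k+1)"]]
    from Zp3 r1(4) r1(2) h gz obtain s where s: "s \<in> {-1,1}" "\<forall>\<^sub>F N in sequentially. \<forall>n::nat. ps!k * real N + real N powr r1 < real n \<and> real n < ps!(k+1) * real N - real N powr r1 \<longrightarrow>
          sqrt (real N) \<le> s * (beval (q (snd (i,j))) (real n) (real N) - beval (q (fst (i,j))) (real n) (real N))"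
      by blast
    show "\<exists>s\<in>{-1,1::real}. \<forall>\<^sub>F N in sequentially. \<forall>n\<in>J k N. sqrt (real N) \<le> s * (fq j n N - fq i n N)"
      using s unfolding J_def fq_def by (intro bexI[of _ s]) auto
  qed
  from bchoice[OF this] obtain \<sigma>s where \<sigma>sA: "\<forall>k\<in>{..<K}. \<sigma>s k permutes {1..L} \<and> (\<forall>\<^sub>F N in sequentially. \<forall>n\<in>J k N. \<forall>i\<in>{1..<L}.
            sqrt (real N) \<le> fq (\<sigma>s k (i+1)) n N - fq (\<sigma>s k i) n N)" by blast
  have \<sigma>s: "\<sigma>s k permutes {1..L} \<and> (\<forall>\<^sub>F N in sequentially. \<forall>n\<in>J k N. \<forall>i\<in>{1..<L}.
            sqrt (real N) \<le> fq (\<sigma>s k (i+1)) n N - fq (\<sigma>s k i) n N)" if "k < K" for k using \<sigma>sA that by auto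
  define xs where "xs \<epsilon> = filter (\<lambda>k. \<sigma>s k = \<epsilon>) [0..<K]" for \<epsilon> :: "nat \<Rightarrow> nat"
  define l where "l \<epsilon> = length (xs \<epsilon>)" for \<epsilon>
  define a where "a \<epsilon> j = ps ! (xs \<epsilon> ! (j - 1))" for \<epsilon> j
  define b where "b \<epsilon> j = ps ! (xs \<epsilon> ! (j - 1) + 1)" for \<epsilon> j
  have xsj: "xs \<epsilon> ! (j-1) < K \<and> \<sigma>s (xs \<epsilon> ! (j-1)) = \<epsilon>" if "j \<in> {1..l \<epsilon>}" for \<epsilon> j
  proof -
    have "xs \<epsilon> ! (j-1) \<in> set (xs \<epsilon>)" using that unfolding l_def by (intro nth_mem) auto
    then show ?thesis unfolding xs_def by auto
  qed
  have dxs: "distinct (xs \<epsilon>)" for \<epsilon> unfolding xs_def by simp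
  define BS where "BS N = {1..N} - (\<Union>k<K. J k N)" for N
  define A where "A = 3 * real (K+1)"
  have Iset: "{n::nat. \<exists>j\<in>{1..l \<epsilon>}. a \<epsilon> j * real N + 1 * real N powr r1 < real n \<and> real n < b \<epsilon> j * real N - real N powr r1}
     = {n. \<exists>k<K. \<sigma>s k = \<epsilon> \<and> n \<in> J k N}" for \<epsilon> N
  proof (intro set_eqI iffI; simp only: mem_Collect_eq)
    fix n assume "\<exists>j\<in>{1..l \<epsilon>}. a \<epsilon> j * real N + 1 * real N powr r1 < real n \<and> real n < b \<epsilon> j * real N - real N powr r1"
    then obtain j where j: "j\<in>{1..l \<epsilon>}" "a \<epsilon> j * real N + 1 * real N powr r1 < real n" "real n < b \<epsilon> j * real N - real N powr r1" by blast
    show "\<exists>k<K. \<sigma>s k = \<epsilon> \<and> n \<in> J k N"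
      using xsj[OF j(1)] j unfolding J_def a_def b_def by (intro exI[of _ "xs \<epsilon> ! (j-1)"]) auto
  next
    fix n assume "\<exists>k<K. \<sigma>s k = \<epsilon> \<and> n \<in> J k N"
    then obtain k where k: "k < K" "\<sigma>s k = \<epsilon>" "n \<in> J k N" by blast
    then have "k \<in> set (xs \<epsilon>)" unfolding xs_def by auto
    then obtain m where m: "m < length (xs \<epsilon>)" "xs \<epsilon> ! m = k" by (metis in_set_conv_nth)
    show "\<exists>j\<in>{1..l \<epsilon>}. a \<epsilon> j * real N + 1 * real N powr r1 < real n \<and> real n < b \<epsilon> j * real N - real N powr r1"
      using m k unfolding J_def a_def b_def l_def by (intro bexI[of _ "m+1"]) auto
  qed
  have Jsub: "ps!k * real N < real n \<and> real n < ps!(k+1) * real N" if "N \<ge> 1" "n \<in> J k N" for k N n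
  proof -
    have pos: "real N powr r1 > 0" using that by simp
    have "ps!k * real N + real N powr r1 < real n" "real n < ps!(k+1) * real N - real N powr r1"
      using that(2) unfolding J_def by auto
    then show ?thesis using pos by linarith
  qed
  have Jdisj: False if "k < K" "k' < K" "k < k'" "N \<ge> 1" "n \<in> J k N" "n \<in> J k' N" for k k' N n
  proof -
    have "ps ! (k+1) \<le> ps ! k'" using monole[of "k+1" k'] that by auto
    then have "ps ! (k+1) * real N \<le> ps ! k' * real N" by (intro mult_right_mono) auto
    then show False using Jsub[OF that(4,5)] Jsub[OF that(4,6)] by linarith
  qed
  have intdisj: "{ps!k<..<ps!(k+1)} \<inter> {ps!k'<..<ps!(k'+1)} = {}" if "k < K" "k' < K" "k \<noteq> k'" for k k'
  proof -
    have "ps ! (k+1) \<le> ps ! k'" if "k < k'" "k' < K" for k k' using monole[of "k+1" k'] that by auto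
    note le = this
    show ?thesis
    proof (cases "k < k'")
      case True
      then have "ps ! (k+1) \<le> ps ! k'" using le that by simp
      then show ?thesis by (intro equals0I) auto
    next
      case False
      then have "k' < k" using that by simp
      then have "ps ! (k'+1) \<le> ps ! k" using le that by simp
      then show ?thesis by (intro equals0I) auto
    qed
  qed
  have BSprops: "{n::nat. 1 \<le> n \<and> real n \<le> real N powr r\<^sub>0} \<subseteq> BS N \<and> finite (BS N) \<and> real (card (BS N)) \<le> A * real N powr r1"
    if N1: "N \<ge> 1" for N
  proof (intro conjI)
    have Npos: "real N > 0" using N1 by simp
    have Nr0: "real N powr r\<^sub>0 \<le> real N powr r1" using N1 r1 by (intro powr_mono) auto
    have Nr01: "real N powr r\<^sub>0 \<le> real N" using N1 r0 powr_mono[of r\<^sub>0 1 "real N"] by simp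
    show "{n::nat. 1 \<le> n \<and> real n \<le> real N powr r\<^sub>0} \<subseteq> BS N"
    proof
      fix n assume n: "n \<in> {n::nat. 1 \<le> n \<and> real n \<le> real N powr r\<^sub>0}"
      have "n \<le> N" using n Nr01 by simp
      moreover have "n \<notin> J k N" if "k < K" for k
      proof
        assume "n \<in> J k N"
        then have "ps!k * real N + real N powr r1 < real n" unfolding J_def by auto
        moreover have "ps!k * real N \<ge> 0" using ps01[of k] that by simp
        ultimately show False using n Nr0 by simp
      qed
      ultimately show "n \<in> BS N" unfolding BS_def using n by auto
    qed
    show "finite (BS N)" unfolding BS_def by simp
    define W where "W m = {n::nat. ps!m * real N - real N powr r1 \<le> real n \<and> real n \<le> ps!m * real N + real N powr r1}" for m
    have sub: "BS N \<subseteq> (\<Union>m\<le>K. W m)"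
    proof
      fix n assume n: "n \<in> BS N"
      then have n1: "1 \<le> n" "n \<le> N" and nJ: "\<And>k. k < K \<Longrightarrow> n \<notin> J k N" unfolding BS_def by auto
      define t where "t = real n / real N"
      have t: "0 < t" "t \<le> 1" unfolding t_def using n1 Npos by auto
      have nt: "real n = t * real N" unfolding t_def using Npos by simp
      define k where "k = Max {m. m \<le> K \<and> ps ! m \<le> t}"
      have finM: "finite {m. m \<le> K \<and> ps ! m \<le> t}" by simp
      have "0 \<in> {m. m \<le> K \<and> ps ! m \<le> t}" using ps0 t by simp
      then have "k \<in> {m. m \<le> K \<and> ps ! m \<le> t}" unfolding k_def by (intro Max_in[OF finM]) auto
      then have kin: "k \<le> K" "ps ! k \<le> t" by auto
      have kmax: "m \<le> k" if "m \<le> K" "ps ! m \<le> t" for m unfolding k_def using finM that by (intro Max_ge) auto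
      show "n \<in> (\<Union>m\<le>K. W m)"
      proof (cases "k = K")
        case True
        then have "t = 1" using kin psK t by simp
        then have "real n = ps ! K * real N" using nt psK by simp
        moreover have "real N powr r1 \<ge> 0" by simp
        ultimately have "n \<in> W K" unfolding W_def by simp
        then show ?thesis by auto
      next
        case False
        then have kK: "k < K" using kin by simp
        have tlt: "t < ps ! (k+1)" using kmax[of "k+1"] kK by force
        have pos: "real N powr r1 \<ge> 0" by simp
        have "ps ! k * real N \<le> real n" unfolding nt using kin Npos by (intro mult_right_mono) auto
        moreover have "real n < ps ! (k+1) * real N" unfolding nt using tlt Npos by simp
        moreover have "\<not> (ps!k * real N + real N powr r1 < real n \<and> real n < ps!(k+1) * real N - real N powr r1)"
          using nJ[OF kK] unfolding J_def by auto
        ultimately have "n \<in> W k \<or> n \<in> W (k+1)" unfolding W_def using pos by auto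
        then show ?thesis using kK by auto
      qed
    qed
    have cardW: "real (card (W m)) \<le> 3 * real N powr r1" for m
    proof -
      have "real (card (W m)) \<le> (ps!m * real N + real N powr r1) - (ps!m * real N - real N powr r1) + 1"
        unfolding W_def by (rule card_window) simp
      moreover have "real N powr r1 \<ge> 1" using N1 r1 by (intro ge_one_powr_ge_zero) auto
      ultimately show ?thesis by linarith
    qed
    have finW: "finite (W m)" for m
    proof -
      have "W m \<subseteq> {..nat \<lceil>ps!m * real N + real N powr r1\<rceil>}" unfolding W_def
        by (auto simp: le_nat_iff le_ceiling_iff)
      then show ?thesis by (rule finite_subset) simp
    qed
    have "card (BS N) \<le> card (\<Union>m\<le>K. W m)" by (rule card_mono[OF _ sub]) (simp add: finW)
    also have "\<dots> \<le> (\<Sum>m\<le>K. card (W m))" by (rule card_UN_le) simp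
    finally have "real (card (BS N)) \<le> (\<Sum>m\<le>K. real (card (W m)))" by (metis of_nat_le_iff of_nat_sum)
    also have "\<dots> \<le> (\<Sum>m\<le>K. 3 * real N powr r1)" by (intro sum_mono cardW)
    also have "\<dots> = A * real N powr r1" unfolding A_def by simp
    finally show "real (card (BS N)) \<le> A * real N powr r1" .
  qed
  have evfinal: "\<forall>\<^sub>F N in sequentially. \<forall>k\<in>{..<K}. \<forall>n\<in>J k N. \<forall>i\<in>{1..<L}.
            sqrt (real N) \<le> fq (\<sigma>s k (i+1)) n N - fq (\<sigma>s k i) n N"
    using \<sigma>s by (intro eventually_ball_finite) auto
  show ?thesis
    unfolding Let_def
    apply (rule exI[of _ r1], rule exI[of _ 1], rule exI[of _ A], rule exI[of _ 1], rule exI[of _ BS],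
           rule exI[of _ l], rule exI[of _ a], rule exI[of _ b])
    apply (simp only: Iset)
    apply (intro conjI)
    subgoal using r1 by simp
    subgoal using r1 by simp
    subgoal by simp
    subgoal unfolding A_def by simp
    subgoal by simp
    subgoal using BSprops by blast
    subgoal
    proof (intro allI impI ballI)
      fix \<epsilon> j assume j: "j \<in> {1..l \<epsilon>}"
      from xsj[OF j] have k: "xs \<epsilon> ! (j-1) < K" by simp
      show "0 \<le> a \<epsilon> j \<and> a \<epsilon> j < b \<epsilon> j \<and> b \<epsilon> j \<le> 1"
        unfolding a_def b_def using ps01[of "xs \<epsilon> ! (j-1)"] ps01[of "xs \<epsilon> ! (j-1) + 1"] mono[of "xs \<epsilon> ! (j-1)" "xs \<epsilon> ! (j-1) + 1"] k
        by auto
    qed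
    subgoal
    proof (intro allI impI)
      fix \<epsilon> \<epsilon>' j j'
      assume H: "\<epsilon> permutes {1..L} \<and> \<epsilon>' permutes {1..L} \<and> j \<in> {1..l \<epsilon>} \<and> j' \<in> {1..l \<epsilon>'} \<and> (j, \<epsilon>) \<noteq> (j', \<epsilon>')"
      define k where "k = xs \<epsilon> ! (j-1)"
      define k' where "k' = xs \<epsilon>' ! (j'-1)"
      have kk: "k < K" "\<sigma>s k = \<epsilon>" "k' < K" "\<sigma>s k' = \<epsilon>'" using xsj H unfolding k_def k'_def by auto
      have "k \<noteq> k'"
      proof
        assume eq: "k = k'"
        then have "\<epsilon> = \<epsilon>'" using kk by simp
        then have "j \<noteq> j'" using H by auto
        moreover have "j - 1 < length (xs \<epsilon>)" "j' - 1 < length (xs \<epsilon>)" using H \<open>\<epsilon> = \<epsilon>'\<close> unfolding l_def by auto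
        moreover have "xs \<epsilon> ! (j-1) = xs \<epsilon> ! (j'-1)" using eq \<open>\<epsilon> = \<epsilon>'\<close> unfolding k_def k'_def by simp
        ultimately have "j - 1 = j' - 1" using nth_eq_iff_index_eq[OF dxs] by blast
        then show False using H \<open>j \<noteq> j'\<close> by auto
      qed
      then show "{a \<epsilon> j<..<b \<epsilon> j} \<inter> {a \<epsilon>' j'<..<b \<epsilon>' j'} = {}"
        using intdisj[OF kk(1,3)] unfolding a_def b_def k_def k'_def by simp
    qed
    subgoal
    proof (intro allI impI conjI)
      fix N :: nat and \<epsilon> \<epsilon>' assume N1: "1 \<le> N" and H: "\<epsilon> permutes {1..L} \<and> \<epsilon>' permutes {1..L} \<and> \<epsilon> \<noteq> \<epsilon>'"
      show "{n. \<exists>k<K. \<sigma>s k = \<epsilon> \<and> n \<in> J k N} \<inter> {n. \<exists>k<K. \<sigma>s k = \<epsilon>' \<and> n \<in> J k N} = {}"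
      proof (intro set_eqI iffI)
        fix n assume n: "n \<in> {n. \<exists>k<K. \<sigma>s k = \<epsilon> \<and> n \<in> J k N} \<inter> {n. \<exists>k<K. \<sigma>s k = \<epsilon>' \<and> n \<in> J k N}"
        then obtain k k' where kk: "k < K" "\<sigma>s k = \<epsilon>" "n \<in> J k N" "k' < K" "\<sigma>s k' = \<epsilon>'" "n \<in> J k' N" by blast
        then have "k \<noteq> k'" using H by auto
        then show "n \<in> {}" using Jdisj[of k k' N n] Jdisj[of k' k N n] kk N1 by (cases "k < k'") auto
      qed auto
    next
      fix N :: nat assume N1: "1 \<le> N"
      show "{1..N} - BS N \<subseteq> (\<Union>\<epsilon>\<in>{\<epsilon>. \<epsilon> permutes {1..L}}. {n. \<exists>k<K. \<sigma>s k = \<epsilon> \<and> n \<in> J k N})"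
      proof
        fix n assume "n \<in> {1..N} - BS N"
        then obtain k where k: "k < K" "n \<in> J k N" unfolding BS_def by auto
        then show "n \<in> (\<Union>\<epsilon>\<in>{\<epsilon>. \<epsilon> permutes {1..L}}. {n. \<exists>k<K. \<sigma>s k = \<epsilon> \<and> n \<in> J k N})"
          using \<sigma>s[OF k(1)] by blast
      qed
    qed
    subgoal
    proof (rule eventually_mono[OF eventually_conj[OF evfinal eventually_ge_at_top[of 1]]], intro allI impI ballI)
      fix N :: nat and \<epsilon> n i
      assume N: "(\<forall>k\<in>{..<K}. \<forall>n\<in>J k N. \<forall>i\<in>{1..<L}. sqrt (real N) \<le> fq (\<sigma>s k (i+1)) n N - fq (\<sigma>s k i) n N) \<and> 1 \<le> N"
        and n: "n \<in> {n. \<exists>k<K. \<sigma>s k = \<epsilon> \<and> n \<in> J k N}" and i: "i \<in> {1..<L}"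
      obtain k where k: "k < K" "\<sigma>s k = \<epsilon>" "n \<in> J k N" using n by blast
      have g: "sqrt (real N) \<le> beval (q (\<epsilon> (i+1))) (real n) (real N) - beval (q (\<epsilon> i)) (real n) (real N)"
        using N k i unfolding fq_def by auto
      have sp: "sqrt (real N) > 0" using N by simp
      show "beval (q (\<epsilon> i)) (real n) (real N) < beval (q (\<epsilon> (i + 1))) (real n) (real N) \<and>
         (bdeg (q (\<epsilon> i)) = bdeg (q (\<epsilon> (i + 1))) \<and> 1 < bdeg (q (\<epsilon> i)) \<longrightarrow>
          beval (q (\<epsilon> i)) (real n) (real N) + 1 * sqrt (real N) \<le> beval (q (\<epsilon> (i + 1))) (real n) (real N))"
        using g sp by (intro conjI impI) linarith+
    qed
    done
qed


end
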